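(* Let $\mathcal{H}=\mathbb{C}^{d_1}\otimes\cdots\otimes\mathbb{C}^{d_N}$ with all $d_i\ge2$ and $G=SL(d_1,\mathbb{C})\times\cdots\times SL(d_N,\mathbb{C})$ acting by $g_1\otimes\cdots\otimes g_N$. Suppose $|\Psi\rangle\in\mathcal{H}$ is semistable and $(g_n)_n$ is a sequence in $G$ with $\|g_n|\Psi\rangle\|\to\infty$. Then for every sequence of real numbers $(\phi_n)_n$ such that the limit $\lim_{n\to\infty}\frac{g_n|\Psi\rangle}{\|g_n|\Psi\rangle\|}e^{i\phi_n}$ exists, this limit lies in the null-cone $\mathcal{N}$.
   Context: The null-cone $\mathcal{N}$ is the set of vectors $|\psi\rangle$ with $0\in\overline{G|\psi\rangle}$ (standard topology); a vector is semistable if it is not in $\mathcal{N}$. *)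

theory Defs
  imports "HOL-Analysis.Function_Topology" "Jordan_Normal_Form.Determinant"
begin

text \<open>Hilbert space H = C^{d_0} (x) ... (x) C^{d_{N-1}}, realised as complex-valued
functions on multi-indices i :: nat => nat with i k < d k for k < N and i k = 0 for k >= N,
extended by zero outside this finite index set.\<close>

definition midx :: "nat \<Rightarrow> (nat \<Rightarrow> nat) \<Rightarrow> (nat \<Rightarrow> nat) set" where
  "midx N d = {i. (\<forall>k<N. i k < d k) \<and> (\<forall>k\<ge>N. i k = 0)}"

definition tensor_space :: "nat \<Rightarrow> (nat \<Rightarrow> nat) \<Rightarrow> ((nat \<Rightarrow> nat) \<Rightarrow> complex) set" where
  "tensor_space N d = {\<psi>. \<forall>i. i \<notin> midx N d \<longrightarrow> \<psi> i = 0}"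

definition tnorm :: "nat \<Rightarrow> (nat \<Rightarrow> nat) \<Rightarrow> ((nat \<Rightarrow> nat) \<Rightarrow> complex) \<Rightarrow> real" where
  "tnorm N d \<psi> = sqrt (\<Sum>i\<in>midx N d. (cmod (\<psi> i))\<^sup>2)"

definition SLgroup :: "nat \<Rightarrow> (nat \<Rightarrow> nat) \<Rightarrow> (nat \<Rightarrow> complex mat) set" where
  "SLgroup N d = {g. \<forall>k<N. g k \<in> carrier_mat (d k) (d k) \<and> det (g k) = 1}"

definition act :: "nat \<Rightarrow> (nat \<Rightarrow> nat) \<Rightarrow> (nat \<Rightarrow> complex mat) \<Rightarrow> ((nat \<Rightarrow> nat) \<Rightarrow> complex)
    \<Rightarrow> ((nat \<Rightarrow> nat) \<Rightarrow> complex)" where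
  "act N d g \<psi> = (\<lambda>i. if i \<in> midx N d
      then (\<Sum>j\<in>midx N d. (\<Prod>k<N. g k $$ (i k, j k)) * \<psi> j) else 0)"

definition null_cone :: "nat \<Rightarrow> (nat \<Rightarrow> nat) \<Rightarrow> ((nat \<Rightarrow> nat) \<Rightarrow> complex) set" where
  "null_cone N d = {\<psi> \<in> tensor_space N d.
      \<forall>e>0. \<exists>g\<in>SLgroup N d. tnorm N d (act N d g \<psi>) < e}"

definition semistable :: "nat \<Rightarrow> (nat \<Rightarrow> nat) \<Rightarrow> ((nat \<Rightarrow> nat) \<Rightarrow> complex) \<Rightarrow> bool" where
  "semistable N d \<psi> \<longleftrightarrow> \<psi> \<in> tensor_space N d \<and> \<psi> \<notin> null_cone N d"

end

theory Submission
  imports Defs "HOL-Analysis.Analysis"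
begin
lemma midx_0: "midx 0 d = {\<lambda>_. 0}"
  unfolding midx_def by auto

lemma midx_Suc: "midx (Suc N) d = (\<lambda>(j,c). j(N:=c)) ` (midx N d \<times> {..<d N})"
proof
  show "midx (Suc N) d \<subseteq> (\<lambda>(j,c). j(N:=c)) ` (midx N d \<times> {..<d N})"
  proof
    fix i assume i: "i \<in> midx (Suc N) d"
    have "i = (\<lambda>(j,c). j(N:=c)) (i(N:=0), i N)" by auto
    moreover have "(i(N:=0), i N) \<in> midx N d \<times> {..<d N}"
      using i unfolding midx_def by auto
    ultimately show "i \<in> (\<lambda>(j,c). j(N:=c)) ` (midx N d \<times> {..<d N})" by blast
  qed
next
  show "(\<lambda>(j,c). j(N:=c)) ` (midx N d \<times> {..<d N}) \<subseteq> midx (Suc N) d"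
    unfolding midx_def by (auto simp: less_Suc_eq)
qed

lemma midx_inj: "inj_on (\<lambda>(j,c). j(N:=c)) (midx N d \<times> {..<d N})"
proof (rule inj_onI, clarify)
  fix j c j' c' assume j: "j \<in> midx N d" "j' \<in> midx N d" and eq: "j(N:=c) = j'(N:=c')"
  from eq have "c = c'" by (metis fun_upd_same)
  moreover have "j = j'"
  proof
    fix k show "j k = j' k"
    proof (cases "k = N")
      case True then show ?thesis using j unfolding midx_def by auto
    next
      case False then show ?thesis using fun_cong[OF eq, of k] by auto
    qed
  qed
  ultimately show "j = j' \<and> c = c'" by simp
qed

lemma finite_midx: "finite (midx N d)"
  by (induction N) (auto simp: midx_0 midx_Suc)

lemma prod_sum_midx:
  fixes f :: "nat \<Rightarrow> nat \<Rightarrow> 'a::comm_semiring_1"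
  shows "(\<Prod>k<N. \<Sum>c<d k. f k c) = (\<Sum>j\<in>midx N d. \<Prod>k<N. f k (j k))"
proof (induction N)
  case 0 then show ?case by (simp add: midx_0)
next
  case (Suc N)
  have "(\<Prod>k<Suc N. \<Sum>c<d k. f k c) = (\<Sum>j\<in>midx N d. \<Prod>k<N. f k (j k)) * (\<Sum>c<d N. f N c)"
    using Suc by simp
  also have "\<dots> = (\<Sum>j\<in>midx N d. \<Sum>c<d N. (\<Prod>k<N. f k (j k)) * f N c)"
    by (simp add: sum_distrib_left sum_distrib_right sum.swap[of _ "midx N d"])
  also have "\<dots> = (\<Sum>(j,c)\<in>midx N d \<times> {..<d N}. (\<Prod>k<N. f k (j k)) * f N c)"
    by (rule sum.cartesian_product)
  also have "\<dots> = (\<Sum>(j,c)\<in>midx N d \<times> {..<d N}. \<Prod>k<Suc N. f k ((j(N:=c)) k))"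
  proof -
    have "(\<Prod>k<N. f k ((j(N:=c)) k)) = (\<Prod>k<N. f k (j k))" for j c
      by (rule prod.cong) auto
    then show ?thesis by simp
  qed
  also have "\<dots> = (\<Sum>i\<in>midx (Suc N) d. \<Prod>k<Suc N. f k (i k))"
    unfolding midx_Suc by (subst sum.reindex[OF midx_inj]) (simp add: case_prod_unfold)
  finally show ?case .
qed

lemma mult_mat_entry:
  assumes "A \<in> carrier_mat n n" "B \<in> carrier_mat n n" "a < n" "b < n"
  shows "(A * B) $$ (a,b) = (\<Sum>c<n. A $$ (a,c) * B $$ (c,b))"
  using assms by (simp add: scalar_prod_def atLeast0LessThan)

lemma act_comp:
  assumes g: "\<forall>k<N. g k \<in> carrier_mat (d k) (d k)"
    and h: "\<forall>k<N. h k \<in> carrier_mat (d k) (d k)"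
  shows "act N d g (act N d h \<psi>) = act N d (\<lambda>k. g k * h k) \<psi>"
proof
  fix i
  show "act N d g (act N d h \<psi>) i = act N d (\<lambda>k. g k * h k) \<psi> i"
  proof (cases "i \<in> midx N d")
    case False then show ?thesis by (simp add: act_def)
  next
    case True
    have "act N d g (act N d h \<psi>) i =
      (\<Sum>j\<in>midx N d. (\<Prod>k<N. g k $$ (i k, j k)) * (\<Sum>l\<in>midx N d. (\<Prod>k<N. h k $$ (j k, l k)) * \<psi> l))"
      using True by (simp add: act_def)
    also have "\<dots> = (\<Sum>j\<in>midx N d. \<Sum>l\<in>midx N d. (\<Prod>k<N. g k $$ (i k, j k)) * (\<Prod>k<N. h k $$ (j k, l k)) * \<psi> l)"
      by (simp add: sum_distrib_left mult.assoc)
    also have "\<dots> = (\<Sum>l\<in>midx N d. \<Sum>j\<in>midx N d. (\<Prod>k<N. g k $$ (i k, j k) * h k $$ (j k, l k)) * \<psi> l)"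
      by (subst sum.swap) (simp add: prod.distrib)
    also have "\<dots> = (\<Sum>l\<in>midx N d. (\<Sum>j\<in>midx N d. (\<Prod>k<N. g k $$ (i k, j k) * h k $$ (j k, l k))) * \<psi> l)"
      by (simp add: sum_distrib_right)
    also have "\<dots> = (\<Sum>l\<in>midx N d. (\<Prod>k<N. (g k * h k) $$ (i k, l k)) * \<psi> l)"
    proof (rule sum.cong[OF refl])
      fix l assume l: "l \<in> midx N d"
      have "(\<Prod>k<N. (g k * h k) $$ (i k, l k)) = (\<Prod>k<N. \<Sum>c<d k. g k $$ (i k, c) * h k $$ (c, l k))"
      proof (rule prod.cong[OF refl])
        fix k assume "k \<in> {..<N}"
        then show "(g k * h k) $$ (i k, l k) = (\<Sum>c<d k. g k $$ (i k, c) * h k $$ (c, l k))"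
          using g h True l unfolding midx_def by (intro mult_mat_entry) auto
      qed
      also have "\<dots> = (\<Sum>j\<in>midx N d. \<Prod>k<N. g k $$ (i k, j k) * h k $$ (j k, l k))"
        by (rule prod_sum_midx)
      finally show "(\<Sum>j\<in>midx N d. \<Prod>k<N. g k $$ (i k, j k) * h k $$ (j k, l k)) * \<psi> l =
          (\<Prod>k<N. (g k * h k) $$ (i k, l k)) * \<psi> l" by simp
    qed
    also have "\<dots> = act N d (\<lambda>k. g k * h k) \<psi> i"
      using True by (simp add: act_def)
    finally show ?thesis .
  qed
qed

lemma act_scale: "act N d g (\<lambda>i. c * x i) = (\<lambda>i. c * act N d g x i)"
  by (auto simp: act_def sum_distrib_left mult.left_commute)

lemma act_diag_factor:
  assumes "\<forall>k<N. \<forall>a<d k. \<forall>b<d k. M k $$ (a,b) = e k a * V k $$ (a,b)"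
    and i: "i \<in> midx N d"
  shows "act N d M \<psi> i = (\<Prod>k<N. e k (i k)) * act N d V \<psi> i"
proof -
  have "act N d M \<psi> i = (\<Sum>j\<in>midx N d. (\<Prod>k<N. e k (i k) * V k $$ (i k, j k)) * \<psi> j)"
    using i assms(1) unfolding act_def
    by (auto intro!: sum.cong prod.cong simp: midx_def)
  also have "\<dots> = (\<Prod>k<N. e k (i k)) * act N d V \<psi> i"
    using i by (simp add: act_def prod.distrib sum_distrib_left mult.assoc)
  finally show ?thesis .
qed

lemma act_bound:
  assumes "\<forall>k<N. \<forall>a<d k. \<forall>b<d k. cmod (V k $$ (a,b)) \<le> 1"
  shows "cmod (act N d V \<psi> i) \<le> (\<Sum>j\<in>midx N d. cmod (\<psi> j))"
proof (cases "i \<in> midx N d")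
  case False then show ?thesis by (simp add: act_def sum_nonneg)
next
  case True
  have "cmod (act N d V \<psi> i) \<le> (\<Sum>j\<in>midx N d. cmod ((\<Prod>k<N. V k $$ (i k, j k)) * \<psi> j))"
    using True unfolding act_def by (simp add: norm_sum)
  also have "\<dots> \<le> (\<Sum>j\<in>midx N d. cmod (\<psi> j))"
  proof (rule sum_mono)
    fix j assume j: "j \<in> midx N d"
    have "(\<Prod>k<N. cmod (V k $$ (i k, j k))) \<le> 1"
      using True j assms unfolding midx_def by (intro prod_le_1) auto
    then show "cmod ((\<Prod>k<N. V k $$ (i k, j k)) * \<psi> j) \<le> cmod (\<psi> j)"
      by (simp add: norm_mult prod_norm mult_left_le_one_le)
  qed
  finally show ?thesis .
qed

lemma act_tendsto:
  assumes "\<forall>k<N. \<forall>a<d k. \<forall>b<d k. ((\<lambda>n. G n k $$ (a,b)) \<longlongrightarrow> H k $$ (a,b)) F"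
    and "\<forall>j. ((\<lambda>n. X n j) \<longlongrightarrow> Y j) F"
  shows "((\<lambda>n. act N d (G n) (X n) i) \<longlongrightarrow> act N d H Y i) F"
proof (cases "i \<in> midx N d")
  case False then show ?thesis by (simp add: act_def)
next
  case True
  show ?thesis
    unfolding act_def using True assms
    by (auto intro!: tendsto_sum tendsto_mult tendsto_prod simp: midx_def)
qed

lemma tnorm_bound:
  assumes "\<forall>i\<in>midx N d. cmod (x i) \<le> e" "0 \<le> e"
  shows "tnorm N d x \<le> sqrt (real (card (midx N d))) * e"
proof -
  have "(\<Sum>i\<in>midx N d. (cmod (x i))\<^sup>2) \<le> (\<Sum>i\<in>midx N d. e\<^sup>2)"
    using assms by (intro sum_mono power_mono) auto
  also have "\<dots> = real (card (midx N d)) * e\<^sup>2" by simp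
  finally have "tnorm N d x \<le> sqrt (real (card (midx N d)) * e\<^sup>2)"
    unfolding tnorm_def by simp
  also have "\<dots> = sqrt (real (card (midx N d))) * e"
    using assms by (simp add: real_sqrt_mult)
  finally show ?thesis .
qed

lemma finite_subseq:
  fixes X :: "nat \<Rightarrow> 'i \<Rightarrow> complex"
  assumes "finite I" "\<forall>n. \<forall>i\<in>I. norm (X n i) \<le> B"
  shows "\<exists>r Y. strict_mono r \<and> (\<forall>i\<in>I. ((\<lambda>n. X (r n) i) \<longlonglongrightarrow> Y i))"
  using assms
proof (induction I rule: finite_induct)
  case empty
  show ?case by (rule exI[of _ id]) (auto simp: strict_mono_def)
next
  case (insert a I)
  then obtain r Y where r: "strict_mono r" and Y: "\<forall>i\<in>I. ((\<lambda>n. X (r n) i) \<longlonglongrightarrow> Y i)"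
    by auto
  have "bounded (cball (0::complex) B)" by (rule bounded_cball)
  moreover have "\<forall>n. X (r n) a \<in> cball 0 B" using insert.prems by auto
  ultimately have "bounded (range (\<lambda>n. X (r n) a))" by (meson bounded_subset image_subset_iff)
  then obtain l s where s: "strict_mono s" and l: "((\<lambda>n. X (r n) a) \<circ> s) \<longlonglongrightarrow> l"
    using bounded_imp_convergent_subsequence by blast
  have "strict_mono (r \<circ> s)" using r s by (simp add: strict_mono_o)
  moreover have "\<forall>i\<in>insert a I. ((\<lambda>n. X ((r \<circ> s) n) i) \<longlonglongrightarrow> (Y(a:=l)) i)"
  proof
    fix i assume "i \<in> insert a I"
    then show "((\<lambda>n. X ((r \<circ> s) n) i) \<longlonglongrightarrow> (Y(a:=l)) i)"
    proof
      assume "i = a" then show ?thesis using l by (simp add: o_def)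
    next
      assume i: "i \<in> I"
      then have "i \<noteq> a" using insert.hyps by auto
      moreover have "((\<lambda>n. X (r n) i) \<circ> s) \<longlonglongrightarrow> Y i"
        using LIMSEQ_subseq_LIMSEQ[OF Y[rule_format, OF i] s] .
      ultimately show ?thesis by (simp add: o_def)
    qed
  qed
  ultimately show ?case by blast
qed

definition ip :: "nat \<Rightarrow> (nat \<Rightarrow> complex) \<Rightarrow> (nat \<Rightarrow> complex) \<Rightarrow> complex" where
  "ip m x y = (\<Sum>i<m. cnj (x i) * y i)"

definition Tm :: "complex mat \<Rightarrow> nat \<Rightarrow> (nat \<Rightarrow> complex) \<Rightarrow> (nat \<Rightarrow> complex)" where
  "Tm g m x = (\<lambda>j. \<Sum>i<m. cnj (g $$ (i,j)) * x i)"

definition nq :: "nat \<Rightarrow> (nat \<Rightarrow> complex) \<Rightarrow> real" where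
  "nq m x = (\<Sum>i<m. (cmod (x i))\<^sup>2)"

definition onf :: "nat \<Rightarrow> (nat \<Rightarrow> nat \<Rightarrow> complex) \<Rightarrow> bool" where
  "onf m F = (\<forall>a<m. \<forall>b<m. ip m (F a) (F b) = (if a = b then 1 else 0))"

definition obj :: "complex mat \<Rightarrow> nat \<Rightarrow> (nat \<Rightarrow> nat \<Rightarrow> complex) \<Rightarrow> real" where
  "obj g m F = (\<Sum>a<m. real a * nq m (Tm g m (F a)))"

lemma ip_lin2: "ip m (\<lambda>i. \<alpha> * x i + \<beta> * y i) (\<lambda>i. \<gamma> * u i + \<delta> * v i) =
  cnj \<alpha> * \<gamma> * ip m x u + cnj \<alpha> * \<delta> * ip m x v + cnj \<beta> * \<gamma> * ip m y u + cnj \<beta> * \<delta> * ip m y v"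
  unfolding ip_def by (simp add: sum.distrib sum_distrib_left algebra_simps)

lemma ip_linR: "ip m x (\<lambda>i. \<gamma> * u i + \<delta> * v i) = \<gamma> * ip m x u + \<delta> * ip m x v"
  unfolding ip_def by (simp add: sum.distrib sum_distrib_left algebra_simps)

lemma ip_linL: "ip m (\<lambda>i. \<alpha> * x i + \<beta> * y i) u = cnj \<alpha> * ip m x u + cnj \<beta> * ip m y u"
  unfolding ip_def by (simp add: sum.distrib sum_distrib_left algebra_simps)

lemma ip_cnj: "ip m y x = cnj (ip m x y)"
  unfolding ip_def by (simp add: cnj_sum mult.commute)

lemma ip_self: "ip m x x = of_real (nq m x)"
proof -
  have "cnj (x i) * x i = of_real ((cmod (x i))\<^sup>2)" for i
    by (metis complex_norm_square mult.commute)
  then show ?thesis unfolding ip_def nq_def of_real_sum by simp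
qed

lemma nq_nonneg: "0 \<le> nq m x"
  unfolding nq_def by (simp add: sum_nonneg)

lemma Tm_lin: "Tm g m (\<lambda>i. \<alpha> * x i + \<beta> * y i) = (\<lambda>j. \<alpha> * Tm g m x j + \<beta> * Tm g m y j)"
  unfolding Tm_def by (simp add: sum.distrib sum_distrib_left algebra_simps)

lemma small_angle:
  fixes p r :: real assumes "p > 0"
  shows "\<exists>t. sin t > 0 \<and> 2 * cos t * p > sin t * r"
proof -
  have lim: "((\<lambda>t. 2 * cos t * p - sin t * r) \<longlongrightarrow> 2 * cos 0 * p - sin 0 * r) (at_right 0)"
    by (intro tendsto_intros)
  have "\<forall>\<^sub>F t in at_right 0. 2 * cos t * p - sin t * r > 0"
    using order_tendstoD(1)[OF lim, of 0] assms by simp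
  moreover have "\<forall>\<^sub>F t in at_right (0::real). sin t > 0"
  proof -
    have "\<forall>\<^sub>F t in at_right (0::real). t < pi"
      by (subst eventually_at_right[OF pi_gt_zero]) (rule exI[of _ pi], auto)
    moreover have "\<forall>\<^sub>F t in at_right (0::real). t > 0"
      by (simp add: eventually_at_right_less)
    ultimately show ?thesis by eventually_elim (simp add: sin_gt_zero)
  qed
  ultimately have ev: "\<forall>\<^sub>F t in at_right (0::real). sin t > 0 \<and> 2 * cos t * p > sin t * r"
    by eventually_elim auto
  then obtain t where "sin t > 0 \<and> 2 * cos t * p > sin t * r"
    using eventually_happens[OF ev] trivial_limit_at_right_real by auto
  then show ?thesis by blast
qed

lemma nq_ip: "nq m x = Re (ip m x x)"
  by (simp add: ip_self)

lemma cross_term: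
  fixes ct st r :: real and z q :: complex
  assumes "z * q = of_real r"
  shows "of_real ct * (of_real st * z) * q + cnj (of_real st * z) * of_real ct * cnj q = of_real (2 * ct * st * r)"
proof -
  have "cnj (of_real st * z) * of_real ct * cnj q = of_real (ct * st) * cnj (z * q)"
    by (simp add: mult_ac)
  also have "\<dots> = of_real (ct * st * r)" using assms by simp
  finally have 1: "cnj (of_real st * z) * of_real ct * cnj q = of_real (ct * st * r)" .
  have "of_real ct * (of_real st * z) * q = of_real (ct * st) * (z * q)" by (simp add: mult_ac)
  also have "\<dots> = of_real (ct * st * r)" using assms by simp
  finally have 2: "of_real ct * (of_real st * z) * q = of_real (ct * st * r)" .
  show ?thesis unfolding 1 2 by simp
qed

lemma perturb:
  assumes F: "onf m F" and ab: "a < m" "b < m" "a \<noteq> b"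
    and qn: "ip m (Tm g m (F a)) (Tm g m (F b)) \<noteq> 0"
  shows "\<exists>F'. onf m F' \<and> obj g m F' > obj g m F"
proof -
  define X where "X = F a"
  define Y where "Y = F b"
  define TX where "TX = Tm g m X"
  define TY where "TY = Tm g m Y"
  define q where "q = ip m TX TY"
  define A where "A = nq m TX"
  define B where "B = nq m TY"
  define w where "w = real a - real b"
  define sg :: real where "sg = (if w > 0 then 1 else -1)"
  define z where "z = of_real sg * cnj q / of_real (cmod q)"
  have q0: "q \<noteq> 0" using qn unfolding q_def TX_def TY_def X_def Y_def .
  have cq: "cnj q * q = of_real ((cmod q)\<^sup>2)"
    by (metis complex_norm_square mult.commute)
  have zq: "z * q = of_real (sg * cmod q)"
  proof -
    have "z * q = of_real sg * (cnj q * q) / of_real (cmod q)"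
      unfolding z_def by (simp add: field_simps)
    also have "\<dots> = of_real sg * of_real ((cmod q)\<^sup>2) / of_real (cmod q)"
      unfolding cq ..
    also have "\<dots> = of_real (sg * cmod q)"
      using q0 by (simp add: power2_eq_square)
    finally show ?thesis .
  qed
  have sg2: "sg * sg = 1" unfolding sg_def by auto
  have zz: "cnj z * z = 1"
  proof -
    have "cnj z * z = of_real (sg * sg) * (q * cnj q) / of_real ((cmod q)\<^sup>2)"
      unfolding z_def by (simp add: power2_eq_square field_simps)
    also have "\<dots> = 1" using q0 sg2 by (simp add: complex_norm_square[symmetric])
    finally show ?thesis .
  qed
  have qpos: "cmod q > 0" using q0 by simp
  obtain t where t1: "sin t > 0" and t2: "2 * cos t * cmod q > sin t * \<bar>A - B\<bar>"
    using small_angle[OF qpos] by blast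
  define ct where "ct = cos t"
  define st where "st = sin t"
  define c :: complex where "c = of_real ct"
  define s :: complex where "s = of_real st"
  have cs1: "c * c + s * s = 1"
    unfolding c_def s_def ct_def st_def
    by (metis of_real_add of_real_mult of_real_1 power2_eq_square sin_cos_squared_add3)
  have cs1r: "ct * ct + st * st = 1"
    unfolding ct_def st_def by (metis power2_eq_square sin_cos_squared_add3)
  have ct2: "ct * ct = 1 - st * st" using cs1r by simp
  define P where "P = (\<lambda>i. c * X i + (s * z) * Y i)"
  define Q where "Q = (\<lambda>i. (- (s * cnj z)) * X i + c * Y i)"
  define F' where "F' = F(a := P, b := Q)"
  have XX: "ip m X X = 1" and YY: "ip m Y Y = 1" and XY: "ip m X Y = 0" and YX: "ip m Y X = 0"
    using F ab unfolding onf_def X_def Y_def by auto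
  have Xe: "ip m X (F e) = 0" "ip m (F e) X = 0" "ip m Y (F e) = 0" "ip m (F e) Y = 0"
    if "e < m" "e \<noteq> a" "e \<noteq> b" for e
    using F ab that unfolding onf_def X_def Y_def by auto
  have cc: "cnj c = c" "cnj s = s" unfolding c_def s_def by simp_all
  have PP: "ip m P P = 1"
  proof -
    have "ip m P P = c * c + s * s * (cnj z * z)"
      unfolding P_def ip_lin2 XX YY XY YX by (simp add: cc mult_ac)
    then show ?thesis using zz cs1 by simp
  qed
  have QQ: "ip m Q Q = 1"
  proof -
    have "ip m Q Q = c * c + s * s * (cnj z * z)"
      unfolding Q_def ip_lin2 XX YY XY YX by (simp add: cc mult_ac)
    then show ?thesis using zz cs1 by simp
  qed
  have PQ: "ip m P Q = 0"
    unfolding P_def Q_def ip_lin2 XX YY XY YX by (simp add: cc mult_ac)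
  have QP: "ip m Q P = 0"
    unfolding P_def Q_def ip_lin2 XX YY XY YX by (simp add: cc mult_ac)
  have Pe: "ip m P (F e) = 0" "ip m (F e) P = 0" "ip m Q (F e) = 0" "ip m (F e) Q = 0"
    if "e < m" "e \<noteq> a" "e \<noteq> b" for e
    using Xe[OF that] unfolding P_def Q_def ip_linL ip_linR by simp_all
  have onf': "onf m F'"
    unfolding onf_def
  proof (intro allI impI)
    fix k l assume k: "k < m" and l: "l < m"
    show "ip m (F' k) (F' l) = (if k = l then 1 else 0)"
      using F k l ab PP QQ PQ QP Pe[OF k] Pe[OF l] unfolding F'_def onf_def
      by (cases "k = a"; cases "k = b"; cases "l = a"; cases "l = b") auto
  qed
  have TP: "Tm g m P = (\<lambda>j. c * TX j + (s * z) * TY j)"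
    unfolding P_def TX_def TY_def by (rule Tm_lin)
  have TQ: "Tm g m Q = (\<lambda>j. (- (s * cnj z)) * TX j + c * TY j)"
    unfolding Q_def TX_def TY_def by (rule Tm_lin)
  have TXX: "ip m TX TX = of_real A" and TYY: "ip m TY TY = of_real B"
    unfolding A_def B_def by (simp_all add: ip_self)
  have TYX: "ip m TY TX = cnj q" unfolding q_def by (rule ip_cnj)
  have nP: "nq m (Tm g m P) = ct * ct * A + st * st * B + 2 * ct * st * (sg * cmod q)"
  proof -
    have "ip m (Tm g m P) (Tm g m P) = c * c * of_real A + s * s * (cnj z * z) * of_real B
        + (c * (s * z) * q + cnj (s * z) * c * cnj q)"
      unfolding TP ip_lin2 TXX TYY TYX q_def[symmetric] by (simp add: cc mult_ac)
    also have "\<dots> = of_real (ct * ct * A + st * st * B + 2 * ct * st * (sg * cmod q))"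
      unfolding c_def s_def cross_term[OF zq] zz by simp
    finally show ?thesis unfolding nq_ip by simp
  qed
  have nQ: "nq m (Tm g m Q) = st * st * A + ct * ct * B - 2 * ct * st * (sg * cmod q)"
  proof -
    have "ip m (Tm g m Q) (Tm g m Q) = s * s * (cnj z * z) * of_real A + c * c * of_real B
        - (c * (s * z) * q + cnj (s * z) * c * cnj q)"
      unfolding TQ ip_lin2 TXX TYY TYX q_def[symmetric] by (simp add: cc mult_ac)
    also have "\<dots> = of_real (st * st * A + ct * ct * B - 2 * ct * st * (sg * cmod q))"
      unfolding c_def s_def cross_term[OF zq] zz by simp
    finally show ?thesis unfolding nq_ip by simp
  qed
  define f where "f = (\<lambda>k. real k * nq m (Tm g m (F' k)) - real k * nq m (Tm g m (F k)))"
  have "obj g m F' - obj g m F = (\<Sum>k<m. f k)"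
    unfolding obj_def f_def by (simp add: sum_subtractf)
  also have "\<dots> = (\<Sum>k\<in>{a,b}. f k)"
    using ab by (intro sum.mono_neutral_right) (auto simp: f_def F'_def)
  also have "\<dots> = f a + f b" using ab by simp
  also have "\<dots> = real a * (nq m (Tm g m P) - A) + real b * (nq m (Tm g m Q) - B)"
    using ab unfolding f_def F'_def A_def B_def TX_def TY_def X_def Y_def
    by (simp add: algebra_simps)
  also have "\<dots> = w * (st * st * (B - A)) + 2 * ct * st * (w * sg) * cmod q"
    unfolding nP nQ w_def ct2 by (simp add: algebra_simps)
  also have "\<dots> \<ge> st * (\<bar>w\<bar> * (2 * ct * cmod q - st * \<bar>A - B\<bar>))"
  proof -
    have "w * sg = \<bar>w\<bar>" unfolding sg_def by auto
    moreover have "w * (st * st * (B - A)) \<ge> - (st * st * \<bar>w\<bar> * \<bar>A - B\<bar>)"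
    proof -
      have "\<bar>w * (st * st * (B - A))\<bar> = st * st * \<bar>w\<bar> * \<bar>A - B\<bar>"
        by (simp add: abs_mult abs_minus_commute)
      then show ?thesis by linarith
    qed
    ultimately show ?thesis by (simp add: algebra_simps)
  qed
  finally have "obj g m F' - obj g m F \<ge> st * (\<bar>w\<bar> * (2 * ct * cmod q - st * \<bar>A - B\<bar>))" .
  moreover have "st * (\<bar>w\<bar> * (2 * ct * cmod q - st * \<bar>A - B\<bar>)) > 0"
  proof -
    have "\<bar>w\<bar> > 0" using ab unfolding w_def by auto
    moreover have "2 * ct * cmod q - st * \<bar>A - B\<bar> > 0" using t2 unfolding ct_def st_def by simp
    ultimately show ?thesis using t1 unfolding st_def by simp
  qed
  ultimately show ?thesis using onf' by (intro exI[of _ F']) auto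
qed

lemma onf_bound:
  assumes "onf m F" "a < m" "i < m"
  shows "cmod (F a i) \<le> 1"
proof -
  have "nq m (F a) = 1" using assms unfolding onf_def by (simp add: nq_ip)
  moreover have "(cmod (F a i))\<^sup>2 \<le> nq m (F a)"
    unfolding nq_def using assms(3) by (intro member_le_sum) auto
  ultimately have "(cmod (F a i))\<^sup>2 \<le> 1\<^sup>2" by simp
  then show ?thesis by (rule power2_le_imp_le) simp
qed

lemma Tm_bound:
  assumes "\<forall>i<m. cmod (x i) \<le> 1"
  shows "cmod (Tm g m x j) \<le> (\<Sum>i<m. cmod (g $$ (i,j)))"
proof -
  have "cmod (Tm g m x j) \<le> (\<Sum>i<m. cmod (cnj (g $$ (i,j)) * x i))"
    unfolding Tm_def by (rule norm_sum)
  also have "\<dots> \<le> (\<Sum>i<m. cmod (g $$ (i,j)))"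
    using assms by (intro sum_mono) (auto simp: norm_mult intro: mult_left_le)
  finally show ?thesis .
qed

lemma obj_bound:
  assumes "onf m F"
  shows "obj g m F \<le> (\<Sum>a<m. real a * (\<Sum>j<m. (\<Sum>i<m. cmod (g $$ (i,j)))\<^sup>2))"
  unfolding obj_def
proof (rule sum_mono)
  fix a assume a: "a \<in> {..<m}"
  have "nq m (Tm g m (F a)) \<le> (\<Sum>j<m. (\<Sum>i<m. cmod (g $$ (i,j)))\<^sup>2)"
    unfolding nq_def
    using onf_bound[OF assms] a by (intro sum_mono power_mono Tm_bound) auto
  then show "real a * nq m (Tm g m (F a)) \<le> real a * (\<Sum>j<m. (\<Sum>i<m. cmod (g $$ (i,j)))\<^sup>2)"
    by (simp add: mult_left_mono)
qed

lemma onf_id: "onf m (\<lambda>a i. if a = i then 1 else 0)"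
  unfolding onf_def ip_def
proof (intro allI impI)
  fix a b assume a: "a < m" and b: "b < m"
  have eq: "(\<lambda>i. cnj (if a = i then 1 else 0) * (if b = i then 1 else (0::complex))) =
    (\<lambda>i. if i = a then (if a = b then 1 else 0) else 0)" by auto
  show "(\<Sum>i<m. cnj (if a = i then 1 else 0) * (if b = i then 1 else (0::complex))) = (if a = b then 1 else 0)"
    unfolding eq using a by (simp add: sum.delta)
qed

lemma ip_tendsto:
  assumes "\<forall>i<m. ((\<lambda>n. x n i) \<longlongrightarrow> x0 i) F" "\<forall>i<m. ((\<lambda>n. y n i) \<longlongrightarrow> y0 i) F"
  shows "((\<lambda>n. ip m (x n) (y n)) \<longlongrightarrow> ip m x0 y0) F"
  unfolding ip_def using assms by (auto intro!: tendsto_intros)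

lemma obj_tendsto:
  assumes "\<forall>a<m. \<forall>i<m. ((\<lambda>n. X n a i) \<longlongrightarrow> X0 a i) F"
  shows "((\<lambda>n. obj g m (X n)) \<longlongrightarrow> obj g m X0) F"
  unfolding obj_def nq_def Tm_def using assms by (auto intro!: tendsto_intros)

lemma exists_max:
  "\<exists>F. onf m F \<and> (\<forall>F'. onf m F' \<longrightarrow> obj g m F' \<le> obj g m F)"
proof -
  define S where "S = obj g m ` {F. onf m F}"
  define K where "K = (\<Sum>a<m. real a * (\<Sum>j<m. (\<Sum>i<m. cmod (g $$ (i,j)))\<^sup>2))"
  have bdd: "bdd_above S" unfolding S_def bdd_above_def using obj_bound by blast
  have ne: "S \<noteq> {}" unfolding S_def using onf_id by blast
  define s where "s = Sup S"
  have upper: "obj g m F' \<le> s" if "onf m F'" for F'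
    unfolding s_def using bdd that by (intro cSup_upper) (auto simp: S_def)
  have "\<exists>F. onf m F \<and> obj g m F > s - inverse (real (Suc n))" for n
  proof -
    have "s - inverse (real (Suc n)) < s" by simp
    then obtain y where "y \<in> S" "s - inverse (real (Suc n)) < y"
      using less_cSup_iff[OF ne bdd] unfolding s_def by blast
    then show ?thesis unfolding S_def by blast
  qed
  then obtain Fs where Fs: "\<And>n. onf m (Fs n)" "\<And>n. obj g m (Fs n) > s - inverse (real (Suc n))"
    by metis
  have "\<forall>n. \<forall>p\<in>{..<m} \<times> {..<m}. norm ((\<lambda>n (a,i). Fs n a i) n p) \<le> 1"
    using onf_bound[OF Fs(1)] by auto
  from finite_subseq[OF _ this] obtain r Y where r: "strict_mono r"
    and Y: "\<forall>p\<in>{..<m} \<times> {..<m}. ((\<lambda>n. (\<lambda>n (a,i). Fs n a i) (r n) p) \<longlonglongrightarrow> Y p)"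
    by blast
  define F0 where "F0 = (\<lambda>a i. Y (a,i))"
  have conv: "\<forall>a<m. \<forall>i<m. ((\<lambda>n. Fs (r n) a i) \<longlonglongrightarrow> F0 a i)"
    using Y unfolding F0_def by auto
  have onf0: "onf m F0"
    unfolding onf_def
  proof (intro allI impI)
    fix a b assume a: "a < m" and b: "b < m"
    have "(\<lambda>n. ip m (Fs (r n) a) (Fs (r n) b)) \<longlonglongrightarrow> ip m (F0 a) (F0 b)"
      using conv a b by (intro ip_tendsto) auto
    moreover have "(\<lambda>n. ip m (Fs (r n) a) (Fs (r n) b)) = (\<lambda>n. if a = b then 1 else 0)"
      using Fs(1) a b unfolding onf_def by auto
    ultimately show "ip m (F0 a) (F0 b) = (if a = b then 1 else 0)"
      using LIMSEQ_unique tendsto_const by metis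
  qed
  have lim1: "(\<lambda>n. obj g m (Fs (r n))) \<longlonglongrightarrow> obj g m F0"
    using conv by (intro obj_tendsto) auto
  have lim2: "(\<lambda>n. obj g m (Fs (r n))) \<longlonglongrightarrow> s"
  proof (rule tendsto_sandwich[of "\<lambda>n. s - inverse (real (Suc n))" _ _ "\<lambda>n. s"])
    show "\<forall>\<^sub>F n in sequentially. s - inverse (real (Suc n)) \<le> obj g m (Fs (r n))"
    proof (rule always_eventually, rule allI)
      fix n
      have "n \<le> r n" using r by (rule strict_mono_imp_increasing)
      then have "inverse (real (Suc (r n))) \<le> inverse (real (Suc n))"
        by (simp add: le_imp_inverse_le)
      then show "s - inverse (real (Suc n)) \<le> obj g m (Fs (r n))"
        using Fs(2)[of "r n"] by linarith
    qed
    show "\<forall>\<^sub>F n in sequentially. obj g m (Fs (r n)) \<le> s"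
      using upper Fs(1) by auto
    show "(\<lambda>n. s - inverse (real (Suc n))) \<longlonglongrightarrow> s"
      using tendsto_diff[OF tendsto_const LIMSEQ_inverse_real_of_nat, of s] by simp
    show "(\<lambda>n. s) \<longlonglongrightarrow> s" by simp
  qed
  have "obj g m F0 = s" using LIMSEQ_unique[OF lim1 lim2] .
  then show ?thesis using onf0 upper by metis
qed

lemma spectral:
  "\<exists>F. onf m F \<and> (\<forall>a<m. \<forall>b<m. a \<noteq> b \<longrightarrow> ip m (Tm g m (F a)) (Tm g m (F b)) = 0)"
proof -
  obtain F where F: "onf m F" and mx: "\<forall>F'. onf m F' \<longrightarrow> obj g m F' \<le> obj g m F"
    using exists_max by blast
  have "ip m (Tm g m (F a)) (Tm g m (F b)) = 0" if "a < m" "b < m" "a \<noteq> b" for a b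
  proof (rule ccontr)
    assume "ip m (Tm g m (F a)) (Tm g m (F b)) \<noteq> 0"
    from perturb[OF F that this] mx show False by force
  qed
  then show ?thesis using F by blast
qed

definition cadj :: "complex mat \<Rightarrow> complex mat" where
  "cadj A = Matrix.mat (dim_col A) (dim_row A) (\<lambda>(i,j). cnj (A $$ (j,i)))"

lemma cadj_carrier[simp]: "A \<in> carrier_mat m n \<Longrightarrow> cadj A \<in> carrier_mat n m"
  unfolding cadj_def by auto

lemma cadj_dim[simp]: "dim_row (cadj A) = dim_col A" "dim_col (cadj A) = dim_row A"
  unfolding cadj_def by auto

lemma cadj_index[simp]: "i < dim_col A \<Longrightarrow> j < dim_row A \<Longrightarrow> cadj A $$ (i,j) = cnj (A $$ (j,i))"
  unfolding cadj_def by auto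

definition dmat :: "nat \<Rightarrow> (nat \<Rightarrow> complex) \<Rightarrow> complex mat" where
  "dmat m e = Matrix.mat m m (\<lambda>(i,j). if i = j then e i else 0)"

lemma dmat_carrier[simp]: "dmat m e \<in> carrier_mat m m"
  unfolding dmat_def by auto

lemma dmat_dim[simp]: "dim_row (dmat m e) = m" "dim_col (dmat m e) = m"
  unfolding dmat_def by auto

lemma det_dmat: "Determinant.det (dmat m e) = (\<Prod>i<m. e i)"
proof -
  have "upper_triangular (dmat m e)" unfolding dmat_def upper_triangular_def by auto
  then have "Determinant.det (dmat m e) = prod_list (diag_mat (dmat m e))"
    by (rule det_upper_triangular[of _ m]) simp
  also have "\<dots> = prod_list (map e [0..<m])"
    unfolding diag_mat_def dmat_def by (intro arg_cong[where f=prod_list]) auto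
  also have "\<dots> = (\<Prod>i\<in>set [0..<m]. e i)"
    by (rule prod.distinct_set_conv_list[symmetric]) simp
  also have "\<dots> = (\<Prod>i<m. e i)" by (simp add: atLeast0LessThan)
  finally show ?thesis .
qed

lemma dmat_mult_index:
  assumes "V \<in> carrier_mat m m" "a < m" "b < m"
  shows "(dmat m e * V) $$ (a,b) = e a * V $$ (a,b)"
proof -
  have "(dmat m e * V) $$ (a,b) = (\<Sum>c<m. (if a = c then e a else 0) * V $$ (c,b))"
    using assms by (subst mult_mat_entry[of _ m]) (auto simp: dmat_def intro!: sum.cong)
  also have "\<dots> = (\<Sum>c<m. if c = a then e a * V $$ (a,b) else 0)"
    by (intro sum.cong) auto
  also have "\<dots> = e a * V $$ (a,b)" using assms by (simp add: sum.delta)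
  finally show ?thesis .
qed

lemma det_bound:
  assumes A: "A \<in> carrier_mat m m" and b: "\<forall>i<m. \<forall>j<m. cmod (A $$ (i,j)) \<le> 1"
  shows "cmod (Determinant.det A) \<le> fact m"
proof -
  let ?P = "{p. p permutes {0..<m}}"
  have "cmod (Determinant.det A) = cmod (\<Sum>p\<in>?P. of_int (sign p) * (\<Prod>i = 0..<m. A $$ (i, p i)))"
    using A by (simp add: Determinant.det_def)
  also have "\<dots> \<le> (\<Sum>p\<in>?P. cmod (of_int (sign p) * (\<Prod>i = 0..<m. A $$ (i, p i))))"
    by (rule norm_sum)
  also have "\<dots> \<le> (\<Sum>p\<in>?P. 1)"
  proof (rule sum_mono)
    fix p assume p: "p \<in> ?P"
    have s: "\<bar>real_of_int (sign p)\<bar> = 1" by (simp add: sign_def)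
    have "(\<Prod>i = 0..<m. cmod (A $$ (i, p i))) \<le> 1"
      using b p permutes_in_image[of p "{0..<m}"] by (intro prod_le_1) auto
    then show "cmod (of_int (sign p) * (\<Prod>i = 0..<m. A $$ (i, p i))) \<le> 1"
      by (simp add: norm_mult s prod_norm)
  qed
  also have "\<dots> = fact m" by (simp add: card_permutations)
  finally show ?thesis .
qed

lemma svd:
  assumes g: "g \<in> carrier_mat m m" and dg: "Determinant.det g = 1"
  shows "\<exists>U D V. U \<in> carrier_mat m m \<and> cadj U * U = 1\<^sub>m m \<and> (\<forall>i<m. \<forall>a<m. cmod (U $$ (i,a)) \<le> 1)
     \<and> (\<forall>a<m. D a > (0::real)) \<and> V \<in> carrier_mat m m
     \<and> (\<forall>a<m. \<forall>j<m. (cadj U * g) $$ (a,j) = of_real (D a) * V $$ (a,j))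
     \<and> (\<forall>a<m. \<forall>j<m. cmod (V $$ (a,j)) \<le> 1) \<and> (\<Prod>a<m. D a) \<le> (fact m)^2"
proof -
  obtain F where F: "onf m F" and orth: "\<forall>a<m. \<forall>b<m. a \<noteq> b \<longrightarrow> ip m (Tm g m (F a)) (Tm g m (F b)) = 0"
    using spectral by blast
  define U where "U = Matrix.mat m m (\<lambda>(i,a). F a i)"
  define y where "y = (\<lambda>a. Tm g m (F a))"
  define D where "D = (\<lambda>a. sqrt (nq m (y a)))"
  define V where "V = Matrix.mat m m (\<lambda>(a,j). cnj (y a j) / of_real (D a))"
  have U: "U \<in> carrier_mat m m" unfolding U_def by simp
  have V: "V \<in> carrier_mat m m" unfolding V_def by simp
  have UU: "cadj U * U = 1\<^sub>m m"
  proof (rule eq_matI)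
    fix a b assume a: "a < dim_row (1\<^sub>m m)" and b: "b < dim_col (1\<^sub>m m)"
    have "(cadj U * U) $$ (a,b) = (\<Sum>c<m. cadj U $$ (a,c) * U $$ (c,b))"
      using a b U by (intro mult_mat_entry) auto
    also have "\<dots> = ip m (F a) (F b)"
      unfolding ip_def using a b U by (intro sum.cong) (auto simp: U_def)
    also have "\<dots> = 1\<^sub>m m $$ (a,b)" using F a b unfolding onf_def by auto
    finally show "(cadj U * U) $$ (a,b) = 1\<^sub>m m $$ (a,b)" .
  qed (use U in auto)
  have Ub: "\<forall>i<m. \<forall>a<m. cmod (U $$ (i,a)) \<le> 1"
    using onf_bound[OF F] unfolding U_def by auto
  have D0: "D a \<ge> 0" for a unfolding D_def by (simp add: nq_nonneg)
  have yD: "cmod (y a j) \<le> D a" if "j < m" for a j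
  proof -
    have "(cmod (y a j))\<^sup>2 \<le> nq m (y a)"
      unfolding nq_def using that by (intro member_le_sum) auto
    then show ?thesis unfolding D_def by (simp add: real_le_rsqrt)
  qed
  have Ug: "(cadj U * g) $$ (a,j) = cnj (y a j)" if "a < m" "j < m" for a j
  proof -
    have "(cadj U * g) $$ (a,j) = (\<Sum>c<m. cadj U $$ (a,c) * g $$ (c,j))"
      using that U g by (intro mult_mat_entry) auto
    also have "\<dots> = (\<Sum>c<m. cnj (F a c) * g $$ (c,j))"
      using that U by (intro sum.cong) (auto simp: U_def)
    also have "\<dots> = cnj (y a j)"
      unfolding y_def Tm_def by (simp add: cnj_sum mult.commute)
    finally show ?thesis .
  qed
  have fac: "(cadj U * g) $$ (a,j) = of_real (D a) * V $$ (a,j)" if "a < m" "j < m" for a j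
  proof (cases "D a = 0")
    case True
    then have "cmod (y a j) = 0" using yD[OF that(2), of a] by simp
    then show ?thesis using True Ug[OF that] by simp
  next
    case False
    then show ?thesis using Ug[OF that] that by (simp add: V_def)
  qed
  have eqm: "cadj U * g = dmat m (\<lambda>a. of_real (D a)) * V"
  proof (rule eq_matI)
    fix a j assume a: "a < dim_row (dmat m (\<lambda>a. of_real (D a)) * V)"
      and j: "j < dim_col (dmat m (\<lambda>a. of_real (D a)) * V)"
    then have "a < m" "j < m" using V by auto
    then show "(cadj U * g) $$ (a,j) = (dmat m (\<lambda>a. of_real (D a)) * V) $$ (a,j)"
      using fac dmat_mult_index[OF V] by simp
  qed (use U g V in auto)
  have dU: "Determinant.det (cadj U) * Determinant.det U = 1"
    using UU U by (metis Determinant.det_mult det_one cadj_carrier)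
  have deq: "Determinant.det (cadj U) = of_real (\<Prod>a<m. D a) * Determinant.det V"
  proof -
    have "Determinant.det (cadj U) = Determinant.det (cadj U * g)"
      using U g dg by (simp add: Determinant.det_mult[of _ m])
    also have "\<dots> = Determinant.det (dmat m (\<lambda>a. of_real (D a))) * Determinant.det V"
      unfolding eqm using V by (simp add: Determinant.det_mult[of _ m])
    also have "\<dots> = of_real (\<Prod>a<m. D a) * Determinant.det V"
      by (simp add: det_dmat)
    finally show ?thesis .
  qed
  have "(\<Prod>a<m. D a) \<noteq> 0"
  proof
    assume "(\<Prod>a<m. D a) = 0"
    then have "Determinant.det (cadj U) = 0" unfolding deq by simp
    then show False using dU by simp
  qed
  then have Dpos: "\<forall>a<m. D a > 0" using D0 by (auto simp: less_le)
  have Vb: "\<forall>a<m. \<forall>j<m. cmod (V $$ (a,j)) \<le> 1"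
  proof (intro allI impI)
    fix a j assume a: "a < m" and j: "j < m"
    have "cmod (V $$ (a,j)) = cmod (y a j) / D a"
      using a j Dpos D0[of a] by (simp add: V_def norm_divide)
    also have "\<dots> \<le> 1" using yD[OF j, of a] Dpos a by simp
    finally show "cmod (V $$ (a,j)) \<le> 1" .
  qed
  have VV: "V * cadj V = 1\<^sub>m m"
  proof (rule eq_matI)
    fix a b assume a: "a < dim_row (1\<^sub>m m)" and b: "b < dim_col (1\<^sub>m m)"
    then have am: "a < m" and bm: "b < m" by auto
    have "(V * cadj V) $$ (a,b) = (\<Sum>c<m. V $$ (a,c) * cadj V $$ (c,b))"
      using am bm V by (intro mult_mat_entry) auto
    also have "\<dots> = (\<Sum>c<m. cnj (y a c) * y b c) / (of_real (D a) * of_real (D b))"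
      using am bm V unfolding sum_divide_distrib by (intro sum.cong) (auto simp: V_def)
    also have "\<dots> = ip m (y a) (y b) / (of_real (D a) * of_real (D b))"
      unfolding ip_def ..
    also have "\<dots> = 1\<^sub>m m $$ (a,b)"
    proof (cases "a = b")
      case True
      have "ip m (y a) (y a) = of_real (D a * D a)"
        unfolding ip_self D_def by (simp add: nq_nonneg)
      moreover have "D a \<noteq> 0" using Dpos am by auto
      ultimately show ?thesis using True am by simp
    next
      case False
      then show ?thesis using orth am bm unfolding y_def by simp
    qed
    finally show "(V * cadj V) $$ (a,b) = 1\<^sub>m m $$ (a,b)" .
  qed (use V in auto)
  have dV: "Determinant.det V * Determinant.det (cadj V) = 1"
    using VV V by (metis Determinant.det_mult det_one cadj_carrier)
  have bcV: "cmod (Determinant.det (cadj V)) \<le> fact m"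
    using Vb V by (intro det_bound[of _ m]) auto
  have bcU: "cmod (Determinant.det (cadj U)) \<le> fact m"
    using Ub U by (intro det_bound[of _ m]) auto
  have "(\<Prod>a<m. D a) = (\<Prod>a<m. D a) * (cmod (Determinant.det V) * cmod (Determinant.det (cadj V)))"
  proof -
    have "cmod (Determinant.det V) * cmod (Determinant.det (cadj V)) = 1"
      unfolding norm_mult[symmetric] dV by simp
    then show ?thesis by simp
  qed
  also have "\<dots> = cmod (Determinant.det (cadj U)) * cmod (Determinant.det (cadj V))"
  proof -
    have pn: "cmod (complex_of_real (\<Prod>a<m. D a)) = (\<Prod>a<m. D a)"
      using D0 by (simp only: norm_of_real) (simp add: prod_nonneg)
    show ?thesis unfolding deq norm_mult pn by (simp only: mult.assoc)
  qed
  also have "\<dots> \<le> fact m * fact m"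
    using bcU bcV by (intro mult_mono) auto
  finally have "(\<Prod>a<m. D a) \<le> (fact m)^2" by (simp add: power2_eq_square)
  then show ?thesis using U UU Ub Dpos V fac Vb
    by (intro exI[of _ U] exI[of _ D] exI[of _ V]) simp
qed

lemma act_factor:
  assumes g: "\<forall>k<N. g k \<in> carrier_mat (d k) (d k)"
    and U: "\<forall>k<N. U k \<in> carrier_mat (d k) (d k)"
    and f: "\<forall>k<N. \<forall>a<d k. \<forall>j<d k. (cadj (U k) * g k) $$ (a,j) = of_real (D k a) * V k $$ (a,j)"
    and i: "i \<in> midx N d"
  shows "act N d (\<lambda>k. cadj (U k)) (\<lambda>i. c * act N d g \<Psi> i) i
       = c * of_real (\<Prod>k<N. D k (i k)) * act N d V \<Psi> i"
proof -
  have "act N d (\<lambda>k. cadj (U k)) (\<lambda>i. c * act N d g \<Psi> i) i = c * act N d (\<lambda>k. cadj (U k)) (act N d g \<Psi>) i"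
    by (simp add: act_scale)
  also have "act N d (\<lambda>k. cadj (U k)) (act N d g \<Psi>) = act N d (\<lambda>k. cadj (U k) * g k) \<Psi>"
    using g U by (intro act_comp) auto
  also have "act N d (\<lambda>k. cadj (U k) * g k) \<Psi> i = (\<Prod>k<N. of_real (D k (i k))) * act N d V \<Psi> i"
    using f i by (intro act_diag_factor) auto
  finally show ?thesis by (simp add: mult.assoc)
qed

definition Qp :: "complex mat \<Rightarrow> nat \<Rightarrow> complex mat \<Rightarrow> (nat \<Rightarrow> real) \<Rightarrow> complex mat \<Rightarrow> bool" where
  "Qp g m U D V \<longleftrightarrow> U \<in> carrier_mat m m \<and> cadj U * U = 1\<^sub>m m \<and> (\<forall>i<m. \<forall>a<m. cmod (U $$ (i,a)) \<le> 1)
     \<and> (\<forall>a<m. D a > (0::real)) \<and> V \<in> carrier_mat m m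
     \<and> (\<forall>a<m. \<forall>j<m. (cadj U * g) $$ (a,j) = of_real (D a) * V $$ (a,j))
     \<and> (\<forall>a<m. \<forall>j<m. cmod (V $$ (a,j)) \<le> 1) \<and> (\<Prod>a<m. D a) \<le> (fact m)^2"

lemma svd_choice:
  assumes "\<forall>n. \<forall>k<N. g n k \<in> carrier_mat (d k) (d k) \<and> Determinant.det (g n k) = 1"
  shows "\<exists>U D V. \<forall>n. \<forall>k<N. Qp (g n k) (d k) (U n k) (D n k) (V n k)"
proof -
  have "\<forall>n k. \<exists>X. k < N \<longrightarrow> Qp (g n k) (d k) (fst X) (fst (snd X)) (snd (snd X))"
  proof (intro allI)
    fix n k
    show "\<exists>X. k < N \<longrightarrow> Qp (g n k) (d k) (fst X) (fst (snd X)) (snd (snd X))"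
    proof (cases "k < N")
      case True
      then obtain U D V where "Qp (g n k) (d k) U D V"
        using svd[of "g n k" "d k"] assms unfolding Qp_def by blast
      then show ?thesis by (intro exI[of _ "(U, D, V)"]) auto
    qed auto
  qed
  then obtain X where X: "\<forall>n k. k < N \<longrightarrow> Qp (g n k) (d k) (fst (X n k)) (fst (snd (X n k))) (snd (snd (X n k)))"
    by metis
  show ?thesis
    by (rule exI[of _ "\<lambda>n k. fst (X n k)"], rule exI[of _ "\<lambda>n k. fst (snd (X n k))"],
        rule exI[of _ "\<lambda>n k. snd (snd (X n k))"]) (use X in auto)
qed

theorem lemma5:
  fixes N :: nat and d :: "nat \<Rightarrow> nat"
    and \<Psi> :: "(nat \<Rightarrow> nat) \<Rightarrow> complex"
    and g :: "nat \<Rightarrow> nat \<Rightarrow> complex mat"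
    and \<phi> :: "nat \<Rightarrow> real"
    and L :: "(nat \<Rightarrow> nat) \<Rightarrow> complex"
  assumes "\<forall>k<N. d k \<ge> 2"
    and "semistable N d \<Psi>"
    and "\<forall>n. g n \<in> SLgroup N d"
    and "filterlim (\<lambda>n. tnorm N d (act N d (g n) \<Psi>)) at_top sequentially"
    and "(\<lambda>n. (\<lambda>i. act N d (g n) \<Psi> i / complex_of_real (tnorm N d (act N d (g n) \<Psi>))
                  * cis (\<phi> n))) \<longlonglongrightarrow> L"
  shows "L \<in> null_cone N d"
proof -
  note d2 = assms(1)
  have gk: "\<forall>n. \<forall>k<N. g n k \<in> carrier_mat (d k) (d k) \<and> Determinant.det (g n k) = 1"
    using assms(3) unfolding SLgroup_def by blast
  obtain U D V where Q: "\<forall>n. \<forall>k<N. Qp (g n k) (d k) (U n k) (D n k) (V n k)"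
    using svd_choice[OF gk] by blast
  have Uc: "U n k \<in> carrier_mat (d k) (d k)" and UU: "cadj (U n k) * U n k = 1\<^sub>m (d k)"
    and Ub: "\<forall>i<d k. \<forall>a<d k. cmod (U n k $$ (i,a)) \<le> 1"
    and Dp: "\<forall>a<d k. D n k a > 0" and Vc: "V n k \<in> carrier_mat (d k) (d k)"
    and fac: "\<forall>a<d k. \<forall>j<d k. (cadj (U n k) * g n k) $$ (a,j) = of_real (D n k a) * V n k $$ (a,j)"
    and Vb: "\<forall>a<d k. \<forall>j<d k. cmod (V n k $$ (a,j)) \<le> 1"
    and Dprod: "(\<Prod>a<d k. D n k a) \<le> (fact (d k))^2"
    if "k < N" for n k
    using Q that unfolding Qp_def by auto
  define I where "I = Sigma {..<N} (\<lambda>k. {..<d k} \<times> {..<d k})"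
  have finI: "finite I" unfolding I_def by auto
  have "\<forall>n. \<forall>p\<in>I. norm ((\<lambda>n (k,a,b). U n k $$ (a,b)) n p) \<le> 1"
    using Ub unfolding I_def by auto
  from finite_subseq[OF finI this] obtain r Y where r: "strict_mono r"
    and Y0: "\<forall>p\<in>I. ((\<lambda>n. (\<lambda>n (k,a,b). U n k $$ (a,b)) (r n) p) \<longlonglongrightarrow> Y p)"
    by blast
  have Y: "((\<lambda>n. U (r n) k $$ (a,b)) \<longlonglongrightarrow> Y (k,a,b))" if "k < N" "a < d k" "b < d k" for k a b
    using Y0 that unfolding I_def by auto
  define Ul where "Ul k = Matrix.mat (d k) (d k) (\<lambda>(a,b). Y (k,a,b))" for k
  have Ulc: "Ul k \<in> carrier_mat (d k) (d k)" for k unfolding Ul_def by simp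
  have UlU: "cadj (Ul k) * Ul k = 1\<^sub>m (d k)" if k: "k < N" for k
  proof (rule eq_matI)
    fix a b assume a: "a < dim_row (1\<^sub>m (d k))" and b: "b < dim_col (1\<^sub>m (d k))"
    then have a': "a < d k" and b': "b < d k" by auto
    have lim: "(\<lambda>n. (cadj (U (r n) k) * U (r n) k) $$ (a,b)) \<longlonglongrightarrow> (cadj (Ul k) * Ul k) $$ (a,b)"
    proof -
      have e1: "(cadj (U (r n) k) * U (r n) k) $$ (a,b) = (\<Sum>c<d k. cnj (U (r n) k $$ (c,a)) * U (r n) k $$ (c,b))" for n
        using a' b' Uc[OF k, of "r n"] by (subst mult_mat_entry[of _ "d k"]) (auto intro!: sum.cong)
      have e2: "(cadj (Ul k) * Ul k) $$ (a,b) = (\<Sum>c<d k. cnj (Y (k,c,a)) * Y (k,c,b))"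
        using a' b' Ulc[of k] by (subst mult_mat_entry[of _ "d k"]) (auto intro!: sum.cong simp: Ul_def)
      show ?thesis unfolding e1 e2 using Y k a' b' by (auto intro!: tendsto_intros)
    qed
    moreover have "(\<lambda>n. (cadj (U (r n) k) * U (r n) k) $$ (a,b)) = (\<lambda>n. 1\<^sub>m (d k) $$ (a,b))"
      using UU[OF k] by simp
    ultimately show "(cadj (Ul k) * Ul k) $$ (a,b) = 1\<^sub>m (d k) $$ (a,b)"
      using LIMSEQ_unique tendsto_const by metis
  qed (use Ulc in auto)
  have detUl: "Determinant.det (cadj (Ul k)) \<noteq> 0" if "k < N" for k
  proof
    assume "Determinant.det (cadj (Ul k)) = 0"
    moreover have "Determinant.det (cadj (Ul k)) * Determinant.det (Ul k) = 1"
      using UlU[OF that] Ulc[of k] by (metis Determinant.det_mult det_one cadj_carrier)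
    ultimately show False by simp
  qed
  define tn where "tn n = tnorm N d (act N d (g n) \<Psi>)" for n
  define c where "c n = cis (\<phi> n) / of_real (tn n)" for n
  have seq_eq: "(\<lambda>i. act N d (g n) \<Psi> i / complex_of_real (tnorm N d (act N d (g n) \<Psi>)) * cis (\<phi> n))
      = (\<lambda>i. c n * act N d (g n) \<Psi> i)" for n
    unfolding c_def tn_def by (auto simp: field_simps)
  have Lseq: "(\<lambda>n. (\<lambda>i. c n * act N d (g n) \<Psi> i)) \<longlonglongrightarrow> L"
    using assms(5) unfolding seq_eq .
  have Lpt: "(\<lambda>n. c n * act N d (g n) \<Psi> i) \<longlonglongrightarrow> L i" for i
    using continuous_on_tendsto_compose[OF continuous_on_product_coordinates[of i] Lseq] by auto
  have tn0: "tn n \<ge> 0" for n unfolding tn_def tnorm_def by (simp add: sum_nonneg)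
  have cn: "cmod (c n) = inverse (tn n)" for n
    unfolding c_def using tn0[of n] by (simp add: norm_divide norm_mult norm_inverse divide_inverse)
  have c0: "(\<lambda>n. cmod (c n)) \<longlonglongrightarrow> 0"
    unfolding cn using tendsto_inverse_0_at_top[OF assms(4)] unfolding tn_def .
  have Lts: "L \<in> tensor_space N d"
    unfolding tensor_space_def
  proof (intro CollectI allI impI)
    fix i assume "i \<notin> midx N d"
    then have "(\<lambda>n. c n * act N d (g n) \<Psi> i) = (\<lambda>n. 0)" by (simp add: act_def)
    then show "L i = 0" using Lpt[of i] LIMSEQ_unique tendsto_const by metis
  qed
  define L' where "L' = act N d (\<lambda>k. cadj (Ul k)) L"
  have L'lim: "(\<lambda>n. act N d (\<lambda>k. cadj (U (r n) k)) (\<lambda>i. c (r n) * act N d (g (r n)) \<Psi> i) i) \<longlonglongrightarrow> L' i" for i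
    unfolding L'_def
  proof (rule act_tendsto)
    show "\<forall>k<N. \<forall>a<d k. \<forall>b<d k. ((\<lambda>n. cadj (U (r n) k) $$ (a, b)) \<longlongrightarrow> cadj (Ul k) $$ (a, b)) sequentially"
    proof (intro allI impI)
      fix k a b assume k: "k < N" and a: "a < d k" and b: "b < d k"
      have "(\<lambda>n. cadj (U (r n) k) $$ (a, b)) = (\<lambda>n. cnj (U (r n) k $$ (b,a)))"
      proof (rule ext)
        fix n
        have "dim_row (U (r n) k) = d k" "dim_col (U (r n) k) = d k" using Uc[OF k] by auto
        then show "cadj (U (r n) k) $$ (a, b) = cnj (U (r n) k $$ (b,a))" using a b by simp
      qed
      moreover have "cadj (Ul k) $$ (a, b) = cnj (Y (k,b,a))"
        using Ulc[of k] a b by (auto simp: Ul_def)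
      ultimately show "((\<lambda>n. cadj (U (r n) k) $$ (a, b)) \<longlongrightarrow> cadj (Ul k) $$ (a, b)) sequentially"
        using Y[OF k b a] by (auto intro!: tendsto_intros)
    qed
    show "\<forall>j. ((\<lambda>n. c (r n) * act N d (g (r n)) \<Psi> j) \<longlongrightarrow> L j) sequentially"
      using LIMSEQ_subseq_LIMSEQ[OF Lpt r] by (simp add: o_def)
  qed
  define C where "C = (\<Sum>j\<in>midx N d. cmod (\<Psi> j))"
  have C0: "C \<ge> 0" unfolding C_def by (simp add: sum_nonneg)
  define PD where "PD n i = (\<Prod>k<N. D n k (i k))" for n i
  have PDpos: "PD n i > 0" if "i \<in> midx N d" for n i
    unfolding PD_def using that Dp by (intro prod_pos) (auto simp: midx_def)
  have bnd: "cmod (act N d (\<lambda>k. cadj (U n k)) (\<lambda>i. c n * act N d (g n) \<Psi> i) i) \<le> cmod (c n) * PD n i * C"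
    if i: "i \<in> midx N d" for n i
  proof -
    have "act N d (\<lambda>k. cadj (U n k)) (\<lambda>i. c n * act N d (g n) \<Psi> i) i
       = c n * of_real (PD n i) * act N d (V n) \<Psi> i"
      unfolding PD_def using gk Uc fac i by (intro act_factor) auto
    moreover have "cmod (act N d (V n) \<Psi> i) \<le> C"
      unfolding C_def using Vb by (intro act_bound) auto
    moreover have "\<bar>PD n i\<bar> = PD n i" using PDpos[OF i, of n] by simp
    ultimately show ?thesis
      using PDpos[OF i, of n] by (simp add: norm_mult mult_left_mono)
  qed
  define \<beta> where "\<beta> n k = of_real (\<Prod>a<d k. D n k a) / Determinant.det (cadj (Ul k))" for n k
  define e where "e n k a = (if a = 0 then \<beta> n k else 1) / of_real (D n k a)" for n k a
  define h where "h n k = dmat (d k) (e n k) * cadj (Ul k)" for n k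
  have hG: "h n \<in> SLgroup N d" for n
    unfolding SLgroup_def
  proof (intro CollectI allI impI conjI)
    fix k assume k: "k < N"
    show hc: "h n k \<in> carrier_mat (d k) (d k)" unfolding h_def using Ulc[of k] by auto
    have pD: "(\<Prod>a<d k. D n k a) \<noteq> 0" using Dp[OF k] by (simp add: prod_pos less_imp_neq[symmetric])
    have "Determinant.det (h n k) = Determinant.det (dmat (d k) (e n k)) * Determinant.det (cadj (Ul k))"
      unfolding h_def using Ulc[of k] by (simp add: Determinant.det_mult[of _ "d k"])
    also have "Determinant.det (dmat (d k) (e n k)) = (\<Prod>a<d k. e n k a)" by (rule det_dmat)
    also have "\<dots> = (\<Prod>a<d k. (if a = 0 then \<beta> n k else 1)) / (\<Prod>a<d k. of_real (D n k a))"
      unfolding e_def by (rule prod_dividef)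
    also have "(\<Prod>a<d k. (if a = 0 then \<beta> n k else 1)) = \<beta> n k"
      using d2 k by (simp add: not_less_eq_eq Suc_le_eq) (metis not_numeral_le_zero)
    also have "(\<Prod>a<d k. complex_of_real (D n k a)) = of_real (\<Prod>a<d k. D n k a)" by simp
    finally show "Determinant.det (h n k) = 1"
      unfolding \<beta>_def using pD detUl[OF k] by (simp add: field_simps)
  qed
  have hact: "act N d (h n) L i = (\<Prod>k<N. e n k (i k)) * L' i" if i: "i \<in> midx N d" for n i
    unfolding L'_def
  proof (rule act_diag_factor[OF _ i])
    show "\<forall>k<N. \<forall>a<d k. \<forall>b<d k. h n k $$ (a, b) = e n k a * cadj (Ul k) $$ (a, b)"
      unfolding h_def using Ulc by (auto intro!: dmat_mult_index)
  qed
  define Bk where "Bk k = max 1 ((fact (d k))^2 / cmod (Determinant.det (cadj (Ul k))))" for k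
  define Bt where "Bt = (\<Prod>k<N. Bk k)"
  have Bt0: "Bt \<ge> 0" unfolding Bt_def Bk_def by (intro prod_nonneg) auto
  have ebnd: "cmod (e n k a) \<le> Bk k / D n k a" if k: "k < N" and a: "a < d k" for n k a
  proof -
    have Da: "D n k a > 0" using Dp[OF k] a by auto
    have "cmod (if a = 0 then \<beta> n k else 1) \<le> Bk k"
    proof (cases "a = 0")
      case True
      have "cmod (\<beta> n k) = (\<Prod>a<d k. D n k a) / cmod (Determinant.det (cadj (Ul k)))"
      proof -
        have pn: "cmod (complex_of_real (\<Prod>a<d k. D n k a)) = (\<Prod>a<d k. D n k a)"
        proof -
          have "0 \<le> (\<Prod>a<d k. D n k a)" using Dp[OF k, of n] by (intro prod_nonneg) (auto simp: less_imp_le)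
          then show ?thesis by (simp only: norm_of_real abs_of_nonneg)
        qed
        show ?thesis unfolding \<beta>_def norm_divide pn ..
      qed
      also have "\<dots> \<le> (fact (d k))^2 / cmod (Determinant.det (cadj (Ul k)))"
        using Dprod[OF k] by (intro divide_right_mono) auto
      also have "\<dots> \<le> Bk k" unfolding Bk_def by simp
      finally show ?thesis using True by simp
    next
      case False then show ?thesis unfolding Bk_def by simp
    qed
    then show ?thesis unfolding e_def using Da
      by (simp add: norm_divide divide_right_mono)
  qed
  have ebnd2: "cmod (\<Prod>k<N. e n k (i k)) \<le> Bt / PD n i" if i: "i \<in> midx N d" for n i
  proof -
    have "cmod (\<Prod>k<N. e n k (i k)) = (\<Prod>k<N. cmod (e n k (i k)))" by (simp add: prod_norm)
    also have "\<dots> \<le> (\<Prod>k<N. Bk k / D n k (i k))"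
      using i ebnd by (intro prod_mono) (auto simp: midx_def)
    also have "\<dots> = Bt / PD n i" unfolding Bt_def PD_def by (rule prod_dividef)
    finally show ?thesis .
  qed
  have ev: "\<forall>\<^sub>F n in sequentially. cmod (act N d (h (r n)) L i) \<le> Bt * 2 * C * cmod (c (r n))"
    if i: "i \<in> midx N d" for i
  proof (cases "L' i = 0")
    case True
    then show ?thesis using hact[OF i] Bt0 C0 by (simp add: always_eventually)
  next
    case False
    then have pos: "cmod (L' i) / 2 < cmod (L' i)" by simp
    have "\<forall>\<^sub>F n in sequentially. cmod (L' i) / 2 <
        cmod (act N d (\<lambda>k. cadj (U (r n) k)) (\<lambda>i. c (r n) * act N d (g (r n)) \<Psi> i) i)"
      using order_tendstoD(1)[OF tendsto_norm[OF L'lim[of i]] pos] .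
    then show ?thesis
    proof eventually_elim
      case (elim n)
      let ?P = "PD (r n) i"
      have P: "?P > 0" using PDpos[OF i] .
      have 1: "cmod (L' i) / 2 < cmod (c (r n)) * ?P * C" using elim bnd[OF i, of "r n"] by linarith
      have 2: "cmod (L' i) / ?P < 2 * C * cmod (c (r n))"
        using 1 P by (simp add: field_simps)
      have "cmod (act N d (h (r n)) L i) = cmod (\<Prod>k<N. e (r n) k (i k)) * cmod (L' i)"
        using hact[OF i] by (simp add: norm_mult)
      also have "\<dots> \<le> Bt / ?P * cmod (L' i)"
        using ebnd2[OF i] by (intro mult_right_mono) auto
      also have "\<dots> = Bt * (cmod (L' i) / ?P)" by simp
      also have "\<dots> \<le> Bt * (2 * C * cmod (c (r n)))"
        using 2 Bt0 by (intro mult_left_mono) auto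
      finally show ?case by (simp add: mult.assoc)
    qed
  qed
  have evall: "\<forall>\<^sub>F n in sequentially. \<forall>i\<in>midx N d. cmod (act N d (h (r n)) L i) \<le> Bt * 2 * C * cmod (c (r n))"
    using ev finite_midx by (simp add: eventually_ball_finite)
  have evt: "\<forall>\<^sub>F n in sequentially. tnorm N d (act N d (h (r n)) L) \<le> sqrt (real (card (midx N d))) * (Bt * 2 * C * cmod (c (r n)))"
    using evall by eventually_elim (rule tnorm_bound, auto simp: Bt0 C0)
  have lim0: "(\<lambda>n. sqrt (real (card (midx N d))) * (Bt * 2 * C * cmod (c (r n)))) \<longlonglongrightarrow> 0"
  proof -
    have "(\<lambda>n. cmod (c (r n))) \<longlonglongrightarrow> 0"
      using LIMSEQ_subseq_LIMSEQ[OF c0 r] by (simp add: o_def)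
    then show ?thesis by (auto intro!: tendsto_mult_right_zero)
  qed
  show ?thesis
    unfolding null_cone_def
  proof (intro CollectI conjI allI impI)
    show "L \<in> tensor_space N d" by (rule Lts)
    fix \<epsilon> :: real assume \<epsilon>: "\<epsilon> > 0"
    have "\<forall>\<^sub>F n in sequentially. sqrt (real (card (midx N d))) * (Bt * 2 * C * cmod (c (r n))) < \<epsilon>"
      using order_tendstoD(2)[OF lim0 \<epsilon>] .
    with evt have "\<forall>\<^sub>F n in sequentially. tnorm N d (act N d (h (r n)) L) < \<epsilon>"
      by eventually_elim auto
    then obtain n where "tnorm N d (act N d (h (r n)) L) < \<epsilon>"
      using eventually_sequentially by auto
    then show "\<exists>g\<in>SLgroup N d. tnorm N d (act N d g L) < \<epsilon>" using hG by blast
  qed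
qed

end
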